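(* Assume $\operatorname{char}\mathbb F\ne 2,3$. Let $A$ be a primitive axial algebra of Jordan type $\tfrac12$ which is a Jordan algebra of Clifford type, and let $\mathcal A$ be a closed set of $\tfrac12$-axes generating $A$ such that $A$ is a $3$-transposition algebra with respect to $\mathcal A$ and $D=\{\tau(a)\mid a\in\mathcal A,\ \tau(a)\ne\mathrm{id}\}$ is a conjugacy class of $G=\langle D\rangle$. Then $D$ is a set of $3$-transpositions of symplectic type in $G$.
   Context: For a commutative $\mathbb F$-algebra $A$, $a\in A$, $\lambda\in\mathbb F$, put $A_\lambda(a)=\{x: xa=\lambda x\}$. A $\tfrac12$-axis is an idempotent $a$ with $A=A_1(a)\oplus A_0(a)\oplus A_{1/2}(a)$, $A_1(a)=\mathbb F a$, and with $A_+(a)=A_1(a)\oplus A_0(a)$, $A_-(a)=A_{1/2}(a)$ satisfying $A_+A_+\subseteq A_+$, $A_+A_-\subseteq A_-$, $A_-A_-\subseteq A_+$, $A_0(a)A_0(a)\subseteq A_0(a)$. A primitive axial algebra of Jordan type $\tfrac12$ is a commutative algebra generated by $\tfrac12$-axes. The Miyamoto involution $\tau(a)$ acts as $1$ on $A_+(a)$ and $-1$ on $A_-(a)$. A set $\mathcal A$ of axes is closed if $a^{\tau(b)}\in\mathcal A$ for all $a,b\in\mathcal A$. $A$ is a $3$-transposition algebra with respect to a closed generating set $\mathcal A$ if every product of two elements of $D=\{\tau(a)\mid a\in\mathcal A,\tau(a)\ne\mathrm{id}\}$ has order $1$, $2$ or $3$. A Jordan algebra of Clifford type is an algebra isomorphic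 to $J(V,B)=\mathbb F\mathbf e\oplus V$ ($B$ a symmetric bilinear form on $V$) with product $(\alpha\mathbf e+u)(\beta\mathbf e+v)=(\alpha\beta+B(u,v))\mathbf e+\alpha v+\beta u$. A normal generating set $D$ of $3$-transpositions is of symplectic type if for all $d,e,f\in D$ with $\langle e,f\rangle\cong S_3$, $d$ commutes with at least one of $e,f,efe$. *)

theory Defs
  imports Main "HOL.Vector_Spaces" "HOL-Algebra.Bij" "HOL-Algebra.Generated_Groups" "HOL-Algebra.Sym_Groups"
begin

definition comm_algebra :: "('f::field \<Rightarrow> 'v::ab_group_add \<Rightarrow> 'v) \<Rightarrow> ('v \<Rightarrow> 'v \<Rightarrow> 'v) \<Rightarrow> bool" where
  "comm_algebra sc m \<longleftrightarrow> Vector_Spaces.vector_space sc \<and>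
     (\<forall>x y. m x y = m y x) \<and>
     (\<forall>x y z. m (x + y) z = m x z + m y z) \<and>
     (\<forall>c x y. m (sc c x) y = sc c (m x y))"

definition eig :: "('f::field \<Rightarrow> 'v::ab_group_add \<Rightarrow> 'v) \<Rightarrow> ('v \<Rightarrow> 'v \<Rightarrow> 'v) \<Rightarrow> 'v \<Rightarrow> 'f \<Rightarrow> 'v set" where
  "eig sc m a l = {x. m x a = sc l x}"

definition Aplus :: "('f::field \<Rightarrow> 'v::ab_group_add \<Rightarrow> 'v) \<Rightarrow> ('v \<Rightarrow> 'v \<Rightarrow> 'v) \<Rightarrow> 'v \<Rightarrow> 'v set" where
  "Aplus sc m a = {p + q | p q. p \<in> eig sc m a 1 \<and> q \<in> eig sc m a 0}"

definition Aminus :: "('f::field \<Rightarrow> 'v::ab_group_add \<Rightarrow> 'v) \<Rightarrow> ('v \<Rightarrow> 'v \<Rightarrow> 'v) \<Rightarrow> 'v \<Rightarrow> 'v set" where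
  "Aminus sc m a = eig sc m a (1/2)"

definition half_axis :: "('f::field \<Rightarrow> 'v::ab_group_add \<Rightarrow> 'v) \<Rightarrow> ('v \<Rightarrow> 'v \<Rightarrow> 'v) \<Rightarrow> 'v \<Rightarrow> bool" where
  "half_axis sc m a \<longleftrightarrow>
     m a a = a \<and>
     (\<forall>x. \<exists>x1 x0 xh. x1 \<in> eig sc m a 1 \<and> x0 \<in> eig sc m a 0 \<and> xh \<in> eig sc m a (1/2)
            \<and> x = x1 + x0 + xh) \<and>
     (\<forall>x1 x0 xh. x1 \<in> eig sc m a 1 \<and> x0 \<in> eig sc m a 0 \<and> xh \<in> eig sc m a (1/2)
            \<and> x1 + x0 + xh = 0 \<longrightarrow> x1 = 0 \<and> x0 = 0 \<and> xh = 0) \<and>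
     eig sc m a 1 = range (\<lambda>c. sc c a) \<and>
     (\<forall>x\<in>Aplus sc m a. \<forall>y\<in>Aplus sc m a. m x y \<in> Aplus sc m a) \<and>
     (\<forall>x\<in>Aplus sc m a. \<forall>y\<in>Aminus sc m a. m x y \<in> Aminus sc m a) \<and>
     (\<forall>x\<in>Aminus sc m a. \<forall>y\<in>Aminus sc m a. m x y \<in> Aplus sc m a) \<and>
     (\<forall>x\<in>eig sc m a 0. \<forall>y\<in>eig sc m a 0. m x y \<in> eig sc m a 0)"

definition tau :: "('f::field \<Rightarrow> 'v::ab_group_add \<Rightarrow> 'v) \<Rightarrow> ('v \<Rightarrow> 'v \<Rightarrow> 'v) \<Rightarrow> 'v \<Rightarrow> 'v \<Rightarrow> 'v" where
  "tau sc m a x = (THE y. \<exists>p q. p \<in> Aplus sc m a \<and> q \<in> Aminus sc m a \<and> x = p + q \<and> y = p - q)"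

definition alg_generates :: "('f::field \<Rightarrow> 'v::ab_group_add \<Rightarrow> 'v) \<Rightarrow> ('v \<Rightarrow> 'v \<Rightarrow> 'v) \<Rightarrow> 'v set \<Rightarrow> bool" where
  "alg_generates sc m X \<longleftrightarrow>
     (\<forall>S. module.subspace sc S \<and> (\<forall>x\<in>S. \<forall>y\<in>S. m x y \<in> S) \<and> X \<subseteq> S \<longrightarrow> S = UNIV)"

text \<open>Jordan algebra of Clifford type: isomorphic to J(V,B) = F e + V.  Transported
  along the isomorphism, this says: there is a nonzero e and a subspace V with
  A = F e (+) V and a symmetric bilinear form B on V such that the product is
  (a e + u)(b e + v) = (a b + B(u,v)) e + a v + b u.\<close>
definition clifford_type :: "('f::field \<Rightarrow> 'v::ab_group_add \<Rightarrow> 'v) \<Rightarrow> ('v \<Rightarrow> 'v \<Rightarrow> 'v) \<Rightarrow> bool" where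
  "clifford_type sc m \<longleftrightarrow> (\<exists>e V B.
     e \<noteq> 0 \<and> module.subspace sc V \<and>
     (\<forall>c. sc c e \<in> V \<longrightarrow> c = 0) \<and>
     (\<forall>x. \<exists>c v. v \<in> V \<and> x = sc c e + v) \<and>
     (\<forall>u\<in>V. \<forall>v\<in>V. B u v = B v u) \<and>
     (\<forall>u\<in>V. \<forall>v\<in>V. \<forall>w\<in>V. B (u + v) w = B u w + B v w) \<and>
     (\<forall>c. \<forall>u\<in>V. \<forall>v\<in>V. B (sc c u) v = c * B u v) \<and>
     (\<forall>\<alpha> \<beta>. \<forall>u\<in>V. \<forall>v\<in>V.
        m (sc \<alpha> e + u) (sc \<beta> e + v) = sc (\<alpha> * \<beta> + B u v) e + sc \<alpha> v + sc \<beta> u))"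

definition miyamoto_set :: "('f::field \<Rightarrow> 'v::ab_group_add \<Rightarrow> 'v) \<Rightarrow> ('v \<Rightarrow> 'v \<Rightarrow> 'v) \<Rightarrow> 'v set \<Rightarrow> ('v \<Rightarrow> 'v) set" where
  "miyamoto_set sc m X = {tau sc m a | a. a \<in> X \<and> tau sc m a \<noteq> id}"

definition conj_class :: "('a, 'b) monoid_scheme \<Rightarrow> 'a set \<Rightarrow> 'a set \<Rightarrow> bool" where
  "conj_class G H D \<longleftrightarrow> (\<exists>d\<in>D. D = {g \<otimes>\<^bsub>G\<^esub> d \<otimes>\<^bsub>G\<^esub> inv\<^bsub>G\<^esub> g | g. g \<in> H})"

definition symplectic_3transp :: "('a, 'b) monoid_scheme \<Rightarrow> 'a set \<Rightarrow> 'a set \<Rightarrow> bool" where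
  "symplectic_3transp G H D \<longleftrightarrow>
     D \<subseteq> H \<and> generate G D = H \<and>
     (\<forall>d\<in>D. d \<noteq> \<one>\<^bsub>G\<^esub> \<and> d \<otimes>\<^bsub>G\<^esub> d = \<one>\<^bsub>G\<^esub>) \<and>
     (\<forall>g\<in>H. \<forall>d\<in>D. g \<otimes>\<^bsub>G\<^esub> d \<otimes>\<^bsub>G\<^esub> inv\<^bsub>G\<^esub> g \<in> D) \<and>
     (\<forall>d\<in>D. \<forall>e\<in>D. (d \<otimes>\<^bsub>G\<^esub> e) [^]\<^bsub>G\<^esub> (2::nat) = \<one>\<^bsub>G\<^esub> \<or>
                    (d \<otimes>\<^bsub>G\<^esub> e) [^]\<^bsub>G\<^esub> (3::nat) = \<one>\<^bsub>G\<^esub>) \<and>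
     (\<forall>d\<in>D. \<forall>e\<in>D. \<forall>f\<in>D.
        (G\<lparr>carrier := generate G {e, f}\<rparr>) \<cong> sym_group 3 \<longrightarrow>
          d \<otimes>\<^bsub>G\<^esub> e = e \<otimes>\<^bsub>G\<^esub> d \<or> d \<otimes>\<^bsub>G\<^esub> f = f \<otimes>\<^bsub>G\<^esub> d \<or>
          d \<otimes>\<^bsub>G\<^esub> (e \<otimes>\<^bsub>G\<^esub> f \<otimes>\<^bsub>G\<^esub> e) = (e \<otimes>\<^bsub>G\<^esub> f \<otimes>\<^bsub>G\<^esub> e) \<otimes>\<^bsub>G\<^esub> d)"

end

theory Submission
  imports Defs
begin


lemma (in group) centralizer_subgroup:
  assumes "S \<subseteq> carrier G"
  shows "subgroup {x\<in>carrier G. \<forall>s\<in>S. x \<otimes> s = s \<otimes> x} G"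
proof (rule subgroupI)
  fix x assume x: "x \<in> {x\<in>carrier G. \<forall>s\<in>S. x \<otimes> s = s \<otimes> x}"
  show "inv x \<in> {x\<in>carrier G. \<forall>s\<in>S. x \<otimes> s = s \<otimes> x}"
  proof (safe)
    show "inv x \<in> carrier G" using x by auto
    fix s assume s: "s \<in> S"
    have sc: "s \<in> carrier G" using s assms by auto
    have "x \<otimes> s = s \<otimes> x" using x s by auto
    have xc: "x \<in> carrier G" using x by auto
    have "inv x \<otimes> s = inv x \<otimes> s \<otimes> (x \<otimes> inv x)" using xc sc by simp
    also have "\<dots> = inv x \<otimes> (x \<otimes> s) \<otimes> inv x" using xc sc \<open>x \<otimes> s = s \<otimes> x\<close> by (simp add: m_assoc)
    also have "\<dots> = s \<otimes> inv x" using xc sc by (simp add: m_assoc[symmetric])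
    finally show "inv x \<otimes> s = s \<otimes> inv x" .
  qed
next
  fix x y assume x: "x \<in> {x\<in>carrier G. \<forall>s\<in>S. x \<otimes> s = s \<otimes> x}"
    and y: "y \<in> {x\<in>carrier G. \<forall>s\<in>S. x \<otimes> s = s \<otimes> x}"
  show "x \<otimes> y \<in> {x\<in>carrier G. \<forall>s\<in>S. x \<otimes> s = s \<otimes> x}"
  proof safe
    show "x \<otimes> y \<in> carrier G" using x y by auto
    fix s assume s: "s \<in> S"
    have sc: "s \<in> carrier G" using s assms by auto
    have "x \<otimes> y \<otimes> s = x \<otimes> (s \<otimes> y)" using x y s sc by (simp add: m_assoc)
    also have "\<dots> = s \<otimes> x \<otimes> y" using x y s sc by (simp add: m_assoc[symmetric])
    finally show "x \<otimes> y \<otimes> s = s \<otimes> (x \<otimes> y)" using x y sc by (simp add: m_assoc)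
  qed
qed (use assms in \<open>auto intro!: exI[of _ \<one>]\<close>)

lemma (in group) generate_comm:
  assumes S: "S \<subseteq> carrier G" and c: "\<And>s t. s \<in> S \<Longrightarrow> t \<in> S \<Longrightarrow> s \<otimes> t = t \<otimes> s"
    and x: "x \<in> generate G S" and y: "y \<in> generate G S"
  shows "x \<otimes> y = y \<otimes> x"
proof -
  have "generate G S \<subseteq> {x\<in>carrier G. \<forall>s\<in>S. x \<otimes> s = s \<otimes> x}"
    by (rule generate_subgroup_incl[OF _ centralizer_subgroup[OF S]]) (use S c in auto)
  then have gs: "generate G S \<subseteq> carrier G" and "\<forall>z\<in>generate G S. \<forall>s\<in>S. z \<otimes> s = s \<otimes> z" by auto
  then have "S \<subseteq> {z\<in>carrier G. \<forall>s\<in>generate G S. z \<otimes> s = s \<otimes> z}" using S by auto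
  then have "generate G S \<subseteq> {z\<in>carrier G. \<forall>s\<in>generate G S. z \<otimes> s = s \<otimes> z}"
    by (rule generate_subgroup_incl[OF _ centralizer_subgroup[OF gs]])
  then show ?thesis using x y by auto
qed

lemma S3_noncomm:
  assumes iso: "(G\<lparr>carrier := K\<rparr>) \<cong> sym_group 3"
  shows "\<exists>x\<in>K. \<exists>y\<in>K. x \<otimes>\<^bsub>G\<^esub> y \<noteq> y \<otimes>\<^bsub>G\<^esub> x"
proof -
  obtain h where h: "h \<in> iso (G\<lparr>carrier := K\<rparr>) (sym_group 3)"
    using iso unfolding is_iso_def by auto
  let ?s1 = "Transposition.transpose (1::nat) 2" and ?s2 = "Transposition.transpose (2::nat) 3"
  have c1: "?s1 \<in> carrier (sym_group 3)" and c2: "?s2 \<in> carrier (sym_group 3)"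
    by (auto simp: sym_group_carrier intro!: permutes_swap_id)
  have bij: "bij_betw h K (carrier (sym_group 3))" and hom: "h \<in> hom (G\<lparr>carrier := K\<rparr>) (sym_group 3)"
    using h by (auto simp: iso_def)
  obtain x where x: "x \<in> K" "h x = ?s1" using bij c1 by (metis bij_betw_iff_bijections)
  obtain y where y: "y \<in> K" "h y = ?s2" using bij c2 by (metis bij_betw_iff_bijections)
  have "h (x \<otimes>\<^bsub>G\<^esub> y) = ?s1 \<circ> ?s2" using hom x y by (auto simp: hom_def sym_group_mult)
  moreover have "h (y \<otimes>\<^bsub>G\<^esub> x) = ?s2 \<circ> ?s1" using hom x y by (auto simp: hom_def sym_group_mult)
  moreover have "?s1 \<circ> ?s2 \<noteq> ?s2 \<circ> ?s1"
  proof
    assume "?s1 \<circ> ?s2 = ?s2 \<circ> ?s1"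
    then have "(?s1 \<circ> ?s2) 1 = (?s2 \<circ> ?s1) 1" by simp
    then show False by (simp add: Transposition.transpose_def)
  qed
  ultimately show ?thesis using x y by metis
qed

lemma BijG_carrier: "(f \<in> carrier (BijGroup (UNIV::'a set))) = bij f"
  by (simp add: BijGroup_def Bij_def)
lemma BijG_mult: "f \<in> carrier (BijGroup UNIV) \<Longrightarrow> g \<in> carrier (BijGroup UNIV) \<Longrightarrow>
   f \<otimes>\<^bsub>BijGroup UNIV\<^esub> g = f \<circ> g"
  by (simp add: BijGroup_def compose_def fun_eq_iff)
lemma BijG_one: "\<one>\<^bsub>BijGroup UNIV\<^esub> = id"
  by (simp add: BijGroup_def fun_eq_iff)
lemma BijG_pow: "f \<in> carrier (BijGroup UNIV) \<Longrightarrow> f [^]\<^bsub>BijGroup UNIV\<^esub> (n::nat) = f ^^ n"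
proof (induction n)
  case 0 then show ?case by (simp add: BijG_one)
next
  case (Suc n)
  interpret group "BijGroup UNIV" by (rule group_BijGroup)
  have "f [^]\<^bsub>BijGroup UNIV\<^esub> Suc n = f [^]\<^bsub>BijGroup UNIV\<^esub> n \<otimes>\<^bsub>BijGroup UNIV\<^esub> f" by simp
  also have "\<dots> = f ^^ n \<circ> f" using Suc nat_pow_closed[OF Suc.prems, of n] by (simp add: BijG_mult)
  finally show ?case by (metis funpow_Suc_right)
qed



lemma poly2:
  fixes c :: "'a::field"
  assumes "(2::'a) \<noteq> 0" "(3::'a) \<noteq> 0" "16*c^4 - 12*c^2 + 1 = 1" "4*c - 8*c^3 = 0"
  shows "c = 0"
proof -
  have "4 * c * (1 - 2*c^2) = 4*c - 8*c^3" by (simp add: algebra_simps power2_eq_square power3_eq_cube)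
  from this assms(4) have "4 * c * (1 - 2*c^2) = 0" by (rule trans)
  then have "4 * c = 0 \<or> 1 - 2*c^2 = 0" by (simp only: mult_eq_0_iff)
  moreover have "(4::'a) \<noteq> 0" using assms(1) by (metis mult_eq_0_iff numeral_Bit0_eq_double mult_2)
  ultimately have "c = 0 \<or> 2*c^2 = 1" by auto
  moreover have "2*c^2 = 1 \<Longrightarrow> False"
  proof -
    assume h: "2*c^2 = 1"
    have "16*c^4 - 12*c^2 + 1 = 4*(2*c^2)^2 - 6*(2*c^2) + 1" by (simp add: algebra_simps power2_eq_square power4_eq_xxxx)
    also have "\<dots> = -1" using h by simp
    finally have "(1::'a) = -1" using assms(3) by simp
    then have "(2::'a) = 0" by (metis add_eq_0_iff one_add_one)
    then show False using assms(1) by simp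
  qed
  ultimately show ?thesis by blast
qed
lemma poly3:
  fixes c :: "'a::field"
  assumes "(2::'a) \<noteq> 0" "(3::'a) \<noteq> 0"
    "(16*c^4 - 12*c^2 + 1)*(4*c^2 - 1) + 2*c*(4*c - 8*c^3) = 1"
    "- (4*c - 8*c^3) - 2*c*(16*c^4 - 12*c^2 + 1) = 0"
  shows "c = 0 \<or> 4*c^2 = 1"
proof -
  have "-2*c*((4*c^2 - 1)*(4*c^2 - 3)) = 0" using assms(4) by (simp add: algebra_simps power2_eq_square power3_eq_cube power4_eq_xxxx)
  then have "c = 0 \<or> 4*c^2 = 1 \<or> 4*c^2 = 3" using assms(1) by auto
  moreover have "4*c^2 = 3 \<Longrightarrow> False"
  proof -
    assume h: "4*c^2 = 3"
    have "(16*c^4 - 12*c^2 + 1)*(4*c^2 - 1) + 2*c*(4*c - 8*c^3) = ((4*c^2)^2 - 3*(4*c^2) + 1)*(4*c^2 - 1) + 2*(4*c^2) - (4*c^2)^2" by (simp add: algebra_simps power2_eq_square power3_eq_cube power4_eq_xxxx)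
    also have "\<dots> = -1" using h by simp
    finally have "(1::'a) = -1" using assms(3) by simp
    then have "(2::'a) = 0" by (metis add_eq_0_iff one_add_one)
    then show False using assms(1) by simp
  qed
  ultimately show ?thesis by blast
qed

lemma scal4:
  fixes a b c :: "'a::field"
  assumes "(2::'a) \<noteq> 0" "(3::'a) \<noteq> 0" "4*a^2 = 1" "4*b^2 = 1" "4*c^2 = 1"
  shows "4 * (2*c*a - b)^2 \<noteq> 1"
proof
  assume h: "4 * (2*c*a - b)^2 = 1"
  have eq: "4 * (2*c*a - b)^2 = (4*c^2)*(4*a^2) + 4*b^2 - 2*(8*a*b*c)"
    by (simp add: algebra_simps power2_eq_square)
  have "(1::'a) = (4*c^2)*(4*a^2) + 4*b^2 - 2*(8*a*b*c)" using h eq by metis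
  then have "1 = 1 * 1 + 1 - 2*(8*a*b*c)" unfolding assms(3,4,5) .
  then have "2*(8*a*b*c) = 1" by (simp add: algebra_simps)
  then have X: "8*a*b*c = 1/2" using assms(1) by (simp add: field_simps)
  have "(8*a*b*c)^2 = (4*a^2)*(4*b^2)*(4*c^2)" by (simp add: algebra_simps power2_eq_square)
  then have hh: "(1/2::'a)^2 = 1 * 1 * 1" unfolding X assms(3,4,5) .
  have "(4::'a) \<noteq> 0" using assms(1) by (metis mult_eq_0_iff numeral_Bit0_eq_double mult_2)
  then have "(3::'a) = 4 * (1 - (1/2)^2)" using assms(1) by (simp add: field_simps power2_eq_square)
  also have "\<dots> = 0" using hh by simp
  finally have "(3::'a) = 0" .
  then show False using assms(2) by simp
qed

definition Tc :: "'a::field \<Rightarrow> 'a \<times> 'a \<Rightarrow> 'a \<times> 'a" where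
  "Tc c = (\<lambda>(a,b). (- a + 2*(b + 2*a*c)*c, - (b + 2*a*c)))"

lemma ag_swap: "(x::'a::ab_group_add) + u = y + w \<Longrightarrow> x - y = w - u"
  by (metis add_diff_cancel_left add_diff_cancel_right)

locale cliffalg = vector_space sc for sc :: "'f::field \<Rightarrow> 'v::ab_group_add \<Rightarrow> 'v" +
  fixes m :: "'v \<Rightarrow> 'v \<Rightarrow> 'v" and e :: 'v and V :: "'v set" and B :: "'v \<Rightarrow> 'v \<Rightarrow> 'f"
  assumes madd: "\<And>x y z. m (x + y) z = m x z + m y z"
    and sV: "subspace V"
    and eV: "\<And>c. sc c e \<in> V \<Longrightarrow> c = 0"
    and dec: "\<And>x. \<exists>c v. v \<in> V \<and> x = sc c e + v"
    and Bsym: "\<And>u v. u \<in> V \<Longrightarrow> v \<in> V \<Longrightarrow> B u v = B v u"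
    and Badd: "\<And>u v w. u \<in> V \<Longrightarrow> v \<in> V \<Longrightarrow> w \<in> V \<Longrightarrow> B (u + v) w = B u w + B v w"
    and Bsc: "\<And>c u v. u \<in> V \<Longrightarrow> v \<in> V \<Longrightarrow> B (sc c u) v = c * B u v"
    and prod: "\<And>\<alpha> \<beta> u v. u \<in> V \<Longrightarrow> v \<in> V \<Longrightarrow>
        m (sc \<alpha> e + u) (sc \<beta> e + v) = sc (\<alpha> * \<beta> + B u v) e + sc \<alpha> v + sc \<beta> u"
    and ch2: "(2::'f) \<noteq> 0" and ch3: "(3::'f) \<noteq> 0"
begin

lemma V0[simp]: "0 \<in> V" using sV subspace_0 by blast
lemma Vadd[simp]: "u \<in> V \<Longrightarrow> v \<in> V \<Longrightarrow> u + v \<in> V" using sV subspace_add by blast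
lemma Vsc[simp]: "u \<in> V \<Longrightarrow> sc c u \<in> V" using sV subspace_scale by blast
lemma Vneg[simp]: "u \<in> V \<Longrightarrow> - u \<in> V" using sV subspace_neg by blast
lemma Vdiff[simp]: "u \<in> V \<Longrightarrow> v \<in> V \<Longrightarrow> u - v \<in> V" using sV subspace_diff by blast

lemma B0l[simp]: "v \<in> V \<Longrightarrow> B 0 v = 0"
  using Bsc[of 0 v 0] by simp
lemma B0r[simp]: "v \<in> V \<Longrightarrow> B v 0 = 0"
  using Bsym[of v 0] by simp
lemma Baddr: "u \<in> V \<Longrightarrow> v \<in> V \<Longrightarrow> w \<in> V \<Longrightarrow> B w (u + v) = B w u + B w v"
proof -
  assume a: "u \<in> V" "v \<in> V" "w \<in> V"
  have "B w (u + v) = B (u + v) w" using a by (intro Bsym) auto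
  also have "\<dots> = B u w + B v w" using a by (rule Badd)
  also have "\<dots> = B w u + B w v" using a Bsym by metis
  finally show ?thesis .
qed
lemma Bscr: "u \<in> V \<Longrightarrow> v \<in> V \<Longrightarrow> B v (sc c u) = c * B v u"
proof -
  assume a: "u \<in> V" "v \<in> V"
  have "B v (sc c u) = B (sc c u) v" using a by (intro Bsym) auto
  also have "\<dots> = c * B u v" using a by (rule Bsc)
  also have "\<dots> = c * B v u" using a Bsym by metis
  finally show ?thesis .
qed
lemma Bneg: "u \<in> V \<Longrightarrow> v \<in> V \<Longrightarrow> B (- u) v = - B u v"
proof -
  assume a: "u \<in> V" "v \<in> V"
  have "- u = sc (-1) u" by simp
  then have "B (- u) v = B (sc (-1) u) v" by (rule arg_cong)
  also have "\<dots> = (-1) * B u v" using a by (rule Bsc)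
  finally show ?thesis by simp
qed
lemma Bnegr: "u \<in> V \<Longrightarrow> v \<in> V \<Longrightarrow> B v (- u) = - B v u"
proof -
  assume a: "u \<in> V" "v \<in> V"
  have "B v (- u) = B (- u) v" using a by (intro Bsym) auto
  also have "\<dots> = - B u v" using a by (rule Bneg)
  also have "\<dots> = - B v u" using a Bsym by metis
  finally show ?thesis .
qed
lemma Bdiff: "u \<in> V \<Longrightarrow> v \<in> V \<Longrightarrow> w \<in> V \<Longrightarrow> B (u - v) w = B u w - B v w"
proof -
  assume a: "u \<in> V" "v \<in> V" "w \<in> V"
  have "B (u - v) w = B (u + - v) w" by simp
  also have "\<dots> = B u w + B (- v) w" using a by (intro Badd) auto
  also have "\<dots> = B u w - B v w" using a Bneg by simp
  finally show ?thesis .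
qed
lemma Bdiffr: "u \<in> V \<Longrightarrow> v \<in> V \<Longrightarrow> w \<in> V \<Longrightarrow> B w (u - v) = B w u - B w v"
proof -
  assume a: "u \<in> V" "v \<in> V" "w \<in> V"
  have "B w (u - v) = B (u - v) w" using a by (intro Bsym) auto
  also have "\<dots> = B u w - B v w" using a by (rule Bdiff)
  also have "\<dots> = B w u - B w v" using a Bsym by metis
  finally show ?thesis .
qed

lemmas Bsimps = Badd Baddr Bsc Bscr Bneg Bnegr Bdiff Bdiffr

lemma uniq:
  assumes "u \<in> V" "w \<in> V" "sc a e + u = sc b e + w"
  shows "a = b \<and> u = w"
proof -
  have "sc (a - b) e = w - u" using ag_swap[OF assms(3)]
    by (simp add: scale_left_diff_distrib)
  then have "sc (a - b) e \<in> V" using assms by simp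
  then have "a = b" using eV[of "a-b"] by simp
  then show ?thesis using assms(3) by simp
qed


lemma m0[simp]: "m 0 z = 0"
  using madd[of 0 0 z] by simp
lemma mdiff: "m (x - y) z = m x z - m y z"
  using madd[of "x - y" y z] by (simp add: eq_diff_eq)
lemma eig_diff: "x \<in> eig sc m a l \<Longrightarrow> y \<in> eig sc m a l \<Longrightarrow> x - y \<in> eig sc m a l"
  by (simp add: eig_def mdiff scale_right_diff_distrib)
lemma eig0[simp]: "0 \<in> eig sc m a l"
  by (simp add: eig_def)

lemma tau_eqI:
  assumes ha: "half_axis sc m a" and p: "p \<in> Aplus sc m a" and q: "q \<in> Aminus sc m a"
  shows "tau sc m a (p + q) = p - q"
  unfolding tau_def
proof (rule the_equality)
  show "\<exists>p' q'. p' \<in> Aplus sc m a \<and> q' \<in> Aminus sc m a \<and> p + q = p' + q' \<and> p - q = p' - q'"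
    using p q by blast
next
  fix y assume "\<exists>p' q'. p' \<in> Aplus sc m a \<and> q' \<in> Aminus sc m a \<and> p + q = p' + q' \<and> y = p' - q'"
  then obtain p' q' where p': "p' \<in> Aplus sc m a" and q': "q' \<in> Aminus sc m a"
    and eq: "p + q = p' + q'" and y: "y = p' - q'" by blast
  obtain x1 x0 where x: "p = x1 + x0" "x1 \<in> eig sc m a 1" "x0 \<in> eig sc m a 0"
    using p unfolding Aplus_def by blast
  obtain x1' x0' where x': "p' = x1' + x0'" "x1' \<in> eig sc m a 1" "x0' \<in> eig sc m a 0"
    using p' unfolding Aplus_def by blast
  have u: "\<forall>x1 x0 xh. x1 \<in> eig sc m a 1 \<and> x0 \<in> eig sc m a 0 \<and> xh \<in> eig sc m a (1/2)
            \<and> x1 + x0 + xh = 0 \<longrightarrow> x1 = 0 \<and> x0 = 0 \<and> xh = 0"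
    using ha unfolding half_axis_def by blast
  have s: "(x1 - x1') + (x0 - x0') + (q - q') = 0"
    using eq x(1) x'(1) by (simp add: algebra_simps)
  have "x1 - x1' = 0 \<and> x0 - x0' = 0 \<and> q - q' = 0"
    using u[rule_format, OF conjI[OF eig_diff[OF x(2) x'(2)] conjI[OF eig_diff[OF x(3) x'(3)]
       conjI[OF eig_diff[of q a "1/2" q'] s]]]] q q' unfolding Aminus_def by blast
  then show "y = p - q" using x x' y by simp
qed

lemma ha_dec: "half_axis sc m a \<Longrightarrow> \<forall>x. \<exists>x1 x0 xh. x1 \<in> eig sc m a 1 \<and> x0 \<in> eig sc m a 0 \<and> xh \<in> eig sc m a (1/2)
            \<and> x = x1 + x0 + xh"
  by (unfold half_axis_def) (elim conjE, assumption)

lemma tau_id: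
  assumes ha: "half_axis sc m a" and z: "eig sc m a (1/2) \<subseteq> {0}"
  shows "tau sc m a = id"
proof
  fix x
  obtain x1 x0 xh where d: "x1 \<in> eig sc m a 1" "x0 \<in> eig sc m a 0" "xh \<in> eig sc m a (1/2)"
    "x = x1 + x0 + xh" using ha_dec[OF ha] by blast
  have "xh = 0" using d z by auto
  have "tau sc m a ((x1 + x0) + 0) = (x1 + x0) - 0"
  proof (rule tau_eqI[OF ha])
    show "x1 + x0 \<in> Aplus sc m a" unfolding Aplus_def using d by blast
    show "0 \<in> Aminus sc m a" unfolding Aminus_def by (rule eig0)
  qed
  then show "tau sc m a x = id x" using d \<open>xh = 0\<close> by simp
qed

lemma sc_add: "sc a x + sc b x = sc (a + b) x"
  by (simp add: scale_left_distrib)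

lemma comb2: "a = a' \<Longrightarrow> b = b' \<Longrightarrow> sc a x + sc b y = sc a' x + sc b' y" by simp
lemma comb3: "a = a' \<Longrightarrow> b + c = b' \<Longrightarrow> sc a x + (sc b y + sc c y) = sc a' x + sc b' y"
  by (simp add: sc_add)
lemma comb4: "sc a x + sc b y + (sc c x + sc d y) = sc (a+c) x + sc (b+d) y"
  by (simp add: scale_left_distrib algebra_simps)
lemma ch4: "(4::'f) \<noteq> 0"
proof -
  have "(4::'f) = 2 * 2" by simp
  then show ?thesis using ch2 by (metis mult_eq_0_iff)
qed

lemma ch16: "(16::'f) \<noteq> 0"
proof -
  have "(16::'f) = 4 * 4" by simp
  then show ?thesis using ch4 by (metis mult_eq_0_iff)
qed
lemma ch8: "(8::'f) \<noteq> 0"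
proof -
  have "(8::'f) = 4 * 2" by simp
  then show ?thesis using ch4 ch2 by (metis mult_eq_0_iff)
qed

definition rho where "rho P y = sc (2 * B y P) P - y"

lemma tau_ax:
  assumes P: "P \<in> V" and PP: "B P P = 1"
    and ha: "half_axis sc m (sc (1/2) e + sc (1/2) P)" and y: "y \<in> V"
  shows "tau sc m (sc (1/2) e + sc (1/2) P) (sc \<beta> e + y) = sc \<beta> e + rho P y"
proof -
  define a where "a = sc (1/2) e + sc (1/2) P"
  define k where "k = B y P"
  define x1 where "x1 = sc ((\<beta>+k)/2) e + sc ((\<beta>+k)/2) P"
  define x0 where "x0 = sc ((\<beta>-k)/2) e + sc (-(\<beta>-k)/2) P"
  define q where "q = y - sc k P"
  have "m x1 a = sc ((\<beta>+k)/2 * (1/2) + ((\<beta>+k)/2) * ((1/2) * 1)) e + (sc ((\<beta>+k)/2 * (1/2)) P + sc ((1/2) * ((\<beta>+k)/2)) P)"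
    unfolding x1_def a_def using P by (simp add: prod Bsc Bscr PP add.assoc)
  also have "\<dots> = sc 1 x1" unfolding sc_add x1_def scale_one
    by (rule comb2) (use ch2 ch4 ch8 ch16 in \<open>simp_all add: field_simps\<close>)
  finally have e1: "x1 \<in> eig sc m a 1" by (simp add: eig_def)
  have "m x0 a = sc 0 e + sc 0 P"
    unfolding x0_def a_def using P
    apply (simp add: prod Bsc Bscr PP add.assoc del: scale_zero_left)
    apply (rule comb3)
    using ch2 ch4 ch8 ch16 by (simp_all add: field_simps)
  then have e0: "x0 \<in> eig sc m a 0" by (simp add: eig_def)
  have qV: "q \<in> V" unfolding q_def using y P by simp
  have "m q a = m (sc 0 e + q) a" by simp
  also have "\<dots> = sc (1/2) q" unfolding a_def using qV P
    apply (subst prod)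
    by (simp_all add: Bscr q_def Bdiff y PP k_def Bsc)
  finally have eh: "q \<in> Aminus sc m a" by (simp add: eig_def Aminus_def)
  have x10: "x1 + x0 = sc \<beta> e + sc k P" unfolding x1_def x0_def comb4
    by (rule comb2) (use ch2 ch4 in \<open>simp_all add: field_simps\<close>)
  have pA: "x1 + x0 \<in> Aplus sc m a" unfolding Aplus_def using e1 e0 by blast
  have "tau sc m a ((x1 + x0) + q) = (x1 + x0) - q"
    using tau_eqI[OF ha[folded a_def] pA eh] .
  moreover have "(x1 + x0) + q = sc \<beta> e + y" unfolding x10 q_def by simp
  moreover have "(x1 + x0) - q = sc \<beta> e + rho P y" unfolding x10 q_def rho_def k_def[symmetric]
    by (simp add: algebra_simps flip: sc_add) (simp add: sc_add mult_2_right)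
  ultimately show ?thesis unfolding a_def by simp
qed


lemma ha_idem: "half_axis sc m a \<Longrightarrow> m a a = a"
  by (unfold half_axis_def) (elim conjE, assumption)

lemma axis_form:
  assumes ha: "half_axis sc m a" and nt: "tau sc m a \<noteq> id"
  shows "\<exists>P\<in>V. B P P = 1 \<and> a = sc (1/2) e + sc (1/2) P"
proof -
  obtain \<alpha> y where y: "y \<in> V" and a: "a = sc \<alpha> e + y" using dec by blast
  have "m a a = sc (\<alpha> * \<alpha> + B y y) e + (sc \<alpha> y + sc \<alpha> y)"
    unfolding a using y by (simp add: prod add.assoc)
  then have "sc (\<alpha> * \<alpha> + B y y) e + (sc \<alpha> y + sc \<alpha> y) = sc \<alpha> e + y"
    using ha_idem[OF ha] a by simp
  then have eqs: "\<alpha> * \<alpha> + B y y = \<alpha>" "sc \<alpha> y + sc \<alpha> y = y"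
    using uniq[of "sc \<alpha> y + sc \<alpha> y" y] y by auto
  show ?thesis
  proof (cases "y = 0")
    case True
    have aa: "\<alpha> * \<alpha> = \<alpha>" using eqs True by simp
    have nh: "\<alpha> \<noteq> 1/2"
    proof
      assume h: "\<alpha> = 1/2"
      have "\<alpha> * (\<alpha> - 1) = 0" using aa by (simp add: algebra_simps)
      then have "\<alpha> = 0 \<or> \<alpha> = 1" by simp
      moreover have "\<alpha> * 2 = 1" using h ch2 by simp
      ultimately have "(1::'f) = 0 \<or> (2::'f) = 1" by auto
      then show False by (metis add_cancel_right_right one_add_one zero_neq_one)
    qed
    have "eig sc m a (1/2) \<subseteq> {0}"
    proof
      fix x assume x: "x \<in> eig sc m a (1/2)"
      obtain \<beta> z where z: "z \<in> V" and xz: "x = sc \<beta> e + z" using dec by blast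
      have "m x a = sc (\<beta> * \<alpha>) e + sc \<alpha> z"
        unfolding xz a True using z prod[of z 0 \<beta> \<alpha>] by simp
      moreover have "m x a = sc (1/2) x" using x by (simp add: eig_def)
      ultimately have eqx: "sc (\<beta> * \<alpha>) e + sc \<alpha> z = sc (\<beta> / 2) e + sc (1/2) z"
        unfolding xz by (simp add: scale_right_distrib)
      have u: "\<beta> * \<alpha> = \<beta> / 2 \<and> sc \<alpha> z = sc (1/2) z"
        using uniq[OF _ _ eqx] z by simp
      have "\<beta> * (\<alpha> - 1/2) = \<beta> * \<alpha> - \<beta> / 2" by (simp add: right_diff_distrib)
      also have "\<dots> = 0" using u by simp
      finally have "\<beta> * (\<alpha> - 1/2) = 0" .
      then have "\<beta> = 0" using nh by (metis eq_iff_diff_eq_0 mult_eq_0_iff)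
      moreover have "z = 0" using u nh by (metis scale_cancel_right)
      ultimately have "\<beta> = 0" "z = 0" by auto
      then show "x \<in> {0}" using xz by simp
    qed
    then have "tau sc m a = id" by (rule tau_id[OF ha])
    then show ?thesis using nt by simp
  next
    case False
    have "sc (2 * \<alpha>) y = sc \<alpha> y + sc \<alpha> y" using sc_add[of \<alpha> y \<alpha>] mult_2[of \<alpha>] by metis
    then have "sc (2 * \<alpha>) y = sc 1 y" using eqs(2) by simp
    then have "2 * \<alpha> = 1" using False by (metis scale_cancel_right)
    then have al: "\<alpha> = 1/2" using ch2 by (simp add: field_simps)
    have "B y y = \<alpha> - \<alpha> * \<alpha>" using eqs(1) by (simp add: eq_diff_eq add.commute)
    also have "\<dots> = 1/4" unfolding al using ch2 ch4 by (simp add: field_simps)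
    finally have Byy: "B y y = 1/4" .
    show ?thesis
    proof (intro bexI conjI)
      show "sc 2 y \<in> V" using y by simp
      show "B (sc 2 y) (sc 2 y) = 1" using y Byy ch4 by (simp add: Bsc Bscr mult.commute)
      show "a = sc (1/2) e + sc (1/2) (sc 2 y)" using a al ch2 by simp
    qed
  qed
qed

lemma rhoV[simp]: "P \<in> V \<Longrightarrow> y \<in> V \<Longrightarrow> rho P y \<in> V"
  by (simp add: rho_def)

lemma rhoB: "P \<in> V \<Longrightarrow> y \<in> V \<Longrightarrow> z \<in> V \<Longrightarrow> B (rho P y) z = 2 * B y P * B P z - B y z"
  by (simp add: rho_def Bdiff Bsc)

lemma rho_rho: "P \<in> V \<Longrightarrow> y \<in> V \<Longrightarrow> B P P = 1 \<Longrightarrow> rho P (rho P y) = y"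
  unfolding rho_def[of P "rho P y"] by (simp add: rhoB) (simp add: rho_def)

lemma rho_comm: "P \<in> V \<Longrightarrow> Q \<in> V \<Longrightarrow> y \<in> V \<Longrightarrow> B P Q = 0 \<Longrightarrow>
    rho P (rho Q y) = rho Q (rho P y)"
  unfolding rho_def[of P "rho Q y"] rho_def[of Q "rho P y"]
  apply (simp add: rhoB Bsym[of Q P])
  apply (simp add: rho_def algebra_simps)
  done

lemma rho_neg: "P \<in> V \<Longrightarrow> y \<in> V \<Longrightarrow> rho (- P) y = rho P y"
  by (simp add: rho_def Bnegr)

lemma rho_lin: "P \<in> V \<Longrightarrow> w \<in> V \<Longrightarrow> x \<in> V \<Longrightarrow> rho P (sc c w - x) = sc c (rho P w) - rho P x"
  by (simp add: rho_def Bdiff Bsc algebra_simps scale_left_diff_distrib)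

lemma rho_sym: "P \<in> V \<Longrightarrow> y \<in> V \<Longrightarrow> Q \<in> V \<Longrightarrow> B (rho P y) Q = B y (rho P Q)"
proof -
  assume a: "P \<in> V" "y \<in> V" "Q \<in> V"
  have "B y (rho P Q) = B (rho P Q) y" using a by (simp add: Bsym)
  also have "\<dots> = 2 * B Q P * B P y - B Q y" using a by (simp add: rhoB)
  also have "\<dots> = 2 * B y P * B P Q - B y Q" using a Bsym[of Q P] Bsym[of P y] Bsym[of Q y] by simp
  also have "\<dots> = B (rho P y) Q" using a by (simp add: rhoB)
  finally show ?thesis by simp
qed

lemma rho_conj: "P \<in> V \<Longrightarrow> Q \<in> V \<Longrightarrow> y \<in> V \<Longrightarrow> B P P = 1 \<Longrightarrow>
    rho P (rho Q (rho P y)) = rho (rho P Q) y"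
proof -
  assume a: "P \<in> V" "Q \<in> V" "y \<in> V" "B P P = 1"
  have "rho P (rho Q (rho P y)) = rho P (sc (2 * B (rho P y) Q) Q - rho P y)"
    by (simp add: rho_def)
  also have "\<dots> = sc (2 * B (rho P y) Q) (rho P Q) - rho P (rho P y)"
    using a by (simp add: rho_lin)
  also have "\<dots> = sc (2 * B y (rho P Q)) (rho P Q) - y"
    using a by (simp add: rho_rho rho_sym)
  finally show ?thesis by (simp add: rho_def)
qed


lemma rho_u_coord:
  assumes "u \<in> V" "v \<in> V" "B u u = 1"
  shows "rho u (sc a u + sc b v) = sc (a + 2*b*B u v) u + sc (- b) v"
proof -
  have "B (sc a u + sc b v) u = a + b * B u v" using assms by (simp add: Badd Bsc Bsym[of v u])
  then have "rho u (sc a u + sc b v) = sc (2 * (a + b * B u v)) u - (sc a u + sc b v)"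
    by (simp add: rho_def)
  also have "\<dots> = sc (a + 2*b*B u v) u + sc (- b) v"
    by (simp add: algebra_simps scale_left_diff_distrib flip: sc_add) (simp add: sc_add mult_2_right)
  finally show ?thesis .
qed

lemma rho_v_coord:
  assumes "u \<in> V" "v \<in> V" "B v v = 1"
  shows "rho v (sc a u + sc b v) = sc (- a) u + sc (b + 2*a*B u v) v"
proof -
  have "B (sc a u + sc b v) v = a * B u v + b" using assms by (simp add: Badd Bsc)
  then have "rho v (sc a u + sc b v) = sc (2 * (a * B u v + b)) v - (sc a u + sc b v)"
    by (simp add: rho_def)
  also have "\<dots> = sc (- a) u + sc (b + 2*a*B u v) v"
    by (simp add: algebra_simps scale_left_diff_distrib flip: sc_add) (simp add: sc_add mult_2_right)
  finally show ?thesis .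
qed

lemma T_coord:
  assumes "u \<in> V" "v \<in> V" "B u u = 1" "B v v = 1"
  shows "rho u (rho v (sc a u + sc b v)) = sc (fst (Tc (B u v) (a,b))) u + sc (snd (Tc (B u v) (a,b))) v"
  using assms by (simp only: rho_v_coord rho_u_coord) (simp add: Tc_def)

lemma T_iter:
  assumes "u \<in> V" "v \<in> V" "B u u = 1" "B v v = 1" and f: "\<And>x. x \<in> V \<Longrightarrow> f x = rho u (rho v x)"
  shows "(f ^^ k) (sc a u + sc b v) = sc (fst ((Tc (B u v) ^^ k) (a,b))) u + sc (snd ((Tc (B u v) ^^ k) (a,b))) v"
proof (induction k arbitrary: a b)
  case 0 then show ?case by simp
next
  case (Suc k)
  have "(f ^^ Suc k) (sc a u + sc b v) = (f ^^ k) (f (sc a u + sc b v))" by (simp only: funpow_Suc_right comp_apply)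
  also have "f (sc a u + sc b v) = sc (fst (Tc (B u v) (a,b))) u + sc (snd (Tc (B u v) (a,b))) v"
    using assms by (simp add: f T_coord)
  also have "(f ^^ k) \<dots> = sc (fst ((Tc (B u v) ^^ k) (Tc (B u v) (a,b)))) u + sc (snd ((Tc (B u v) ^^ k) (Tc (B u v) (a,b)))) v"
    using Suc.IH[of "fst (Tc (B u v) (a,b))" "snd (Tc (B u v) (a,b))"] by simp
  finally show ?case by (simp only: funpow_Suc_right comp_apply)
qed

lemma L_core:
  assumes u: "u \<in> V" and v: "v \<in> V" and uu: "B u u = 1" and vv: "B v v = 1"
    and z: "sc a u + sc b v = 0"
  shows "(a = 0 \<and> b = 0) \<or> (B u v * B u v = 1 \<and> u = sc (B u v) v)"
proof -
  define c where "c = B u v"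
  have vu: "B v u = c" using u v Bsym c_def by simp
  have "B (sc a u + sc b v) u = 0" using z u by simp
  then have e1: "a + b * c = 0" using u v uu vu by (simp add: Badd Bsc)
  have "B (sc a u + sc b v) v = 0" using z v by simp
  then have e2: "a * c + b = 0" using u v vv c_def by (simp add: Badd Bsc)
  have b: "b = - (a * c)" using e2 by (simp add: eq_neg_iff_add_eq_0 add.commute)
  show ?thesis
  proof (cases "c * c = 1")
    case False
    have "a * (1 - c * c) = 0" using e1 b by (simp add: algebra_simps)
    then have "a = 0" using False by simp
    then show ?thesis using b by simp
  next
    case True
    have "sc a u + sc b v = sc a (u - sc c v)" using b by (simp add: algebra_simps)
    then have "a = 0 \<or> u = sc c v" using z by simp
    then show ?thesis using b True c_def by auto
  qed
qed

lemma L: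
  assumes u: "u \<in> V" and v: "v \<in> V" and uu: "B u u = 1" and vv: "B v v = 1"
    and f: "\<And>x. x \<in> V \<Longrightarrow> f x = rho u (rho v x)"
    and k: "f ^^ 2 = id \<or> f ^^ 3 = id"
  shows "B u v = 0 \<or> 4 * (B u v)^2 = 1 \<or> u = v \<or> u = - v"
proof -
  define c where "c = B u v"
  obtain k where k: "k = 2 \<or> k = 3" and fk: "f ^^ k = id" using k by blast
  have "(f ^^ k) (sc 1 u + sc 0 v) = sc (fst ((Tc c ^^ k) (1,0))) u + sc (snd ((Tc c ^^ k) (1,0))) v"
    unfolding c_def by (rule T_iter[OF u v uu vv f])
  then have "sc (fst ((Tc c ^^ k) (1,0))) u + sc (snd ((Tc c ^^ k) (1,0))) v = sc 1 u + sc 0 v"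
    using fk by simp
  then have "sc (fst ((Tc c ^^ k) (1,0)) - 1) u + sc (snd ((Tc c ^^ k) (1,0))) v = 0"
    by (simp add: scale_left_diff_distrib algebra_simps)
  from L_core[OF u v uu vv this, folded c_def]
  have "(fst ((Tc c ^^ k) (1,0)) = 1 \<and> snd ((Tc c ^^ k) (1,0)) = 0) \<or> (c * c = 1 \<and> u = sc c v)"
    by simp
  then show ?thesis
  proof
    assume h: "c * c = 1 \<and> u = sc c v"
    then have "(c - 1) * (c + 1) = 0" by (simp add: algebra_simps)
    then have "c = 1 \<or> c = -1" by (simp add: eq_neg_iff_add_eq_0)
    then show ?thesis using h by auto
  next
    assume h: "fst ((Tc c ^^ k) (1,0)) = 1 \<and> snd ((Tc c ^^ k) (1,0)) = 0"
    show ?thesis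
    proof (cases "k = 2")
      case True
      then have "16*c^4 - 12*c^2 + 1 = 1" "4*c - 8*c^3 = 0" using h
        by (simp_all add: Tc_def numeral_eq_Suc algebra_simps power2_eq_square power3_eq_cube power4_eq_xxxx)
      then have "c = 0" using poly2 ch2 ch3 by blast
      then show ?thesis unfolding c_def by simp
    next
      case False
      then have k3: "k = 3" using k by simp
      have "(16*c^4 - 12*c^2 + 1)*(4*c^2 - 1) + 2*c*(4*c - 8*c^3) = 1"
           "- (4*c - 8*c^3) - 2*c*(16*c^4 - 12*c^2 + 1) = 0" using h k3
        by (simp_all add: Tc_def numeral_eq_Suc algebra_simps power2_eq_square power3_eq_cube power4_eq_xxxx)
      then have "c = 0 \<or> 4*c^2 = 1" using poly3 ch2 ch3 by blast
      then show ?thesis unfolding c_def by auto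
    qed
  qed
qed


lemma tau_gen:
  assumes "P \<in> V" "B P P = 1" "half_axis sc m (sc (1/2) e + sc (1/2) P)"
  shows "\<exists>\<beta> y. y \<in> V \<and> x = sc \<beta> e + y \<and> tau sc m (sc (1/2) e + sc (1/2) P) x = sc \<beta> e + rho P y"
proof -
  obtain \<beta> y where "y \<in> V" "x = sc \<beta> e + y" using dec by blast
  then show ?thesis using tau_ax[OF assms] by blast
qed

lemma tau_V:
  assumes "P \<in> V" "B P P = 1" "half_axis sc m (sc (1/2) e + sc (1/2) P)" "y \<in> V"
  shows "tau sc m (sc (1/2) e + sc (1/2) P) y = rho P y"
  using tau_ax[OF assms, of 0] by simp

lemma tau_invol:
  assumes P: "P \<in> V" "B P P = 1" "half_axis sc m (sc (1/2) e + sc (1/2) P)"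
  shows "tau sc m (sc (1/2) e + sc (1/2) P) \<circ> tau sc m (sc (1/2) e + sc (1/2) P) = id"
proof
  fix x
  obtain \<beta> y where y: "y \<in> V" "x = sc \<beta> e + y" using dec by blast
  show "(tau sc m (sc (1/2) e + sc (1/2) P) \<circ> tau sc m (sc (1/2) e + sc (1/2) P)) x = id x"
    using y P by (simp add: tau_ax rho_rho)
qed

lemma tau_comm:
  assumes P: "P \<in> V" "B P P = 1" "half_axis sc m (sc (1/2) e + sc (1/2) P)"
    and Q: "Q \<in> V" "B Q Q = 1" "half_axis sc m (sc (1/2) e + sc (1/2) Q)"
    and c: "B P Q = 0 \<or> P = Q \<or> P = - Q"
  shows "tau sc m (sc (1/2) e + sc (1/2) P) \<circ> tau sc m (sc (1/2) e + sc (1/2) Q) =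
         tau sc m (sc (1/2) e + sc (1/2) Q) \<circ> tau sc m (sc (1/2) e + sc (1/2) P)"
proof
  fix x
  obtain \<beta> y where y: "y \<in> V" "x = sc \<beta> e + y" using dec by blast
  have "rho P (rho Q y) = rho Q (rho P y)"
    using c
  proof (elim disjE)
    assume "B P Q = 0" then show ?thesis using rho_comm[OF P(1) Q(1) y(1)] by blast
  next
    assume "P = Q" then show ?thesis by simp
  next
    assume "P = - Q" then show ?thesis using Q y by (simp add: rho_neg)
  qed
  then show "(tau sc m (sc (1/2) e + sc (1/2) P) \<circ> tau sc m (sc (1/2) e + sc (1/2) Q)) x =
         (tau sc m (sc (1/2) e + sc (1/2) Q) \<circ> tau sc m (sc (1/2) e + sc (1/2) P)) x"
    using y P Q by (simp add: tau_ax)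
qed

lemma rho_scale: "P \<in> V \<Longrightarrow> w \<in> V \<Longrightarrow> rho P (sc c w) = sc c (rho P w)"
  using rho_lin[of P w 0 c] by (simp add: rho_def)

lemma rho_unit: "P \<in> V \<Longrightarrow> Q \<in> V \<Longrightarrow> B P P = 1 \<Longrightarrow> B (rho P Q) (rho P Q) = B Q Q"
  by (simp add: rho_sym rho_rho)

lemma tau_act:
  assumes P: "P \<in> V" "B P P = 1" "half_axis sc m (sc (1/2) e + sc (1/2) P)" and Q: "Q \<in> V"
  shows "tau sc m (sc (1/2) e + sc (1/2) P) (sc (1/2) e + sc (1/2) Q) = sc (1/2) e + sc (1/2) (rho P Q)"
  using tau_ax[OF P, of "sc (1/2) Q" "1/2"] Q P by (simp add: rho_scale)

lemma tau_conj:
  assumes P: "P \<in> V" "B P P = 1" "half_axis sc m (sc (1/2) e + sc (1/2) P)"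
    and Q: "Q \<in> V" "B Q Q = 1" "half_axis sc m (sc (1/2) e + sc (1/2) Q)"
    and R: "half_axis sc m (sc (1/2) e + sc (1/2) (rho P Q))"
  shows "tau sc m (sc (1/2) e + sc (1/2) P) \<circ> tau sc m (sc (1/2) e + sc (1/2) Q) \<circ> tau sc m (sc (1/2) e + sc (1/2) P)
       = tau sc m (sc (1/2) e + sc (1/2) (rho P Q))"
proof
  fix x
  obtain \<beta> y where y: "y \<in> V" "x = sc \<beta> e + y" using dec by blast
  have RV: "rho P Q \<in> V" "B (rho P Q) (rho P Q) = 1" using P Q by (simp_all add: rho_unit)
  show "(tau sc m (sc (1/2) e + sc (1/2) P) \<circ> tau sc m (sc (1/2) e + sc (1/2) Q) \<circ> tau sc m (sc (1/2) e + sc (1/2) P)) x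
       = tau sc m (sc (1/2) e + sc (1/2) (rho P Q)) x"
    using y P Q by (simp add: tau_ax[OF RV R] tau_ax rho_conj)
qed

end

theorem theorem7p10:
  fixes sc :: "'f::field \<Rightarrow> 'v::ab_group_add \<Rightarrow> 'v"
    and m :: "'v \<Rightarrow> 'v \<Rightarrow> 'v"
    and Ax :: "'v set"
  assumes char2: "(2::'f) \<noteq> 0"
    and char3: "(3::'f) \<noteq> 0"
    and alg: "comm_algebra sc m"
    and axes: "\<forall>a\<in>Ax. half_axis sc m a"
    and gen: "alg_generates sc m Ax"
    and cliff: "clifford_type sc m"
    and closed: "\<forall>a\<in>Ax. \<forall>b\<in>Ax. tau sc m b a \<in> Ax"
    and three: "\<forall>d\<in>miyamoto_set sc m Ax. \<forall>e\<in>miyamoto_set sc m Ax.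
                  (d \<circ> e) ^^ 2 = id \<or> (d \<circ> e) ^^ 3 = id"
    and cc: "conj_class (BijGroup (UNIV::'v set))
               (generate (BijGroup (UNIV::'v set)) (miyamoto_set sc m Ax)) (miyamoto_set sc m Ax)"
  shows "symplectic_3transp (BijGroup (UNIV::'v set))
           (generate (BijGroup (UNIV::'v set)) (miyamoto_set sc m Ax)) (miyamoto_set sc m Ax)"
proof -
  let ?G = "BijGroup (UNIV::'v set)"
  let ?D = "miyamoto_set sc m Ax"
  let ?H = "generate ?G ?D"
  interpret grp: group ?G by (rule group_BijGroup)
  obtain e V B where cl: "e \<noteq> 0 \<and> module.subspace sc V \<and>
     (\<forall>c. sc c e \<in> V \<longrightarrow> c = 0) \<and>
     (\<forall>x. \<exists>c v. v \<in> V \<and> x = sc c e + v) \<and>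
     (\<forall>u\<in>V. \<forall>v\<in>V. B u v = B v u) \<and>
     (\<forall>u\<in>V. \<forall>v\<in>V. \<forall>w\<in>V. B (u + v) w = B u w + B v w) \<and>
     (\<forall>c. \<forall>u\<in>V. \<forall>v\<in>V. B (sc c u) v = c * B u v) \<and>
     (\<forall>\<alpha> \<beta>. \<forall>u\<in>V. \<forall>v\<in>V.
        m (sc \<alpha> e + u) (sc \<beta> e + v) = sc (\<alpha> * \<beta> + B u v) e + sc \<alpha> v + sc \<beta> u)"
    using cliff unfolding clifford_type_def by blast
  have vs: "vector_space sc" and madd: "\<forall>x y z. m (x + y) z = m x z + m y z"
    using alg unfolding comm_algebra_def by auto
  have CA: "cliffalg sc m e V B"
    apply (rule cliffalg.intro[OF vs])
    apply (rule cliffalg_axioms.intro)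
    using cl madd char2 char3 by auto
  interpret C: cliffalg sc m e V B by (rule CA)
  define T where "T P = tau sc m (sc (1/2) e + sc (1/2) P)" for P
  define Ok where "Ok P \<longleftrightarrow> P \<in> V \<and> B P P = 1 \<and> half_axis sc m (sc (1/2) e + sc (1/2) P)
     \<and> sc (1/2) e + sc (1/2) P \<in> Ax" for P
  have Dform: "\<exists>P. Ok P \<and> d = T P" if d: "d \<in> ?D" for d
  proof -
    obtain a where a: "a \<in> Ax" "tau sc m a \<noteq> id" "d = tau sc m a"
      using d unfolding miyamoto_set_def by blast
    have ha: "half_axis sc m a" using axes a by blast
    obtain P where P: "P \<in> V" "B P P = 1" "a = sc (1/2) e + sc (1/2) P"
      using C.axis_form[OF ha a(2)] by blast
    show ?thesis unfolding Ok_def T_def using P a ha by auto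
  qed
  have inD: "T P \<in> ?D" if "Ok P" "T P \<noteq> id" for P
    using that unfolding miyamoto_set_def Ok_def T_def by blast
  have Tinv: "T P \<circ> T P = id" if "Ok P" for P
    using that unfolding Ok_def T_def by (intro C.tau_invol) auto
  have TV: "T P y = C.rho P y" if "Ok P" "y \<in> V" for P y
    using that unfolding Ok_def T_def by (intro C.tau_V) auto
  have Tcomm: "T P \<circ> T Q = T Q \<circ> T P" if "Ok P" "Ok Q" "B P Q = 0 \<or> P = Q \<or> P = - Q" for P Q
    using that unfolding Ok_def T_def by (intro C.tau_comm) auto
  have Dcar: "d \<in> carrier ?G" if dD: "d \<in> ?D" for d
  proof -
    obtain P where "Ok P" "d = T P" using Dform[OF dD] by blast
    then have "d \<circ> d = id" using Tinv by simp
    then show ?thesis by (simp add: BijG_carrier o_bij)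
  qed
  have DsubG: "?D \<subseteq> carrier ?G" using Dcar by blast
  have Hsub: "subgroup ?H ?G" by (rule grp.generate_is_subgroup[OF DsubG])
  have Dnid: "d \<noteq> id" if "d \<in> ?D" for d using that unfolding miyamoto_set_def by auto
  have pairL: "B P Q = 0 \<or> 4 * (B P Q)^2 = 1 \<or> P = Q \<or> P = - Q"
    if P: "Ok P" and Q: "Ok Q" and PD: "T P \<in> ?D" and QD: "T Q \<in> ?D" for P Q
  proof -
    have f: "(T P \<circ> T Q) x = C.rho P (C.rho Q x)" if "x \<in> V" for x
      using that P Q TV unfolding Ok_def by (simp add: TV)
    have "(T P \<circ> T Q) ^^ 2 = id \<or> (T P \<circ> T Q) ^^ 3 = id" using three PD QD by blast
    then show ?thesis using C.L[of P Q "T P \<circ> T Q"] P Q f unfolding Ok_def by blast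
  qed
  show ?thesis
    unfolding symplectic_3transp_def
  proof (intro conjI ballI impI)
    show "?D \<subseteq> ?H" by (blast intro: generate.incl)
    show "?H = ?H" ..
  next
    fix d assume d: "d \<in> ?D"
    obtain P where "Ok P" "d = T P" using Dform[OF d] by blast
    then show "d \<noteq> \<one>\<^bsub>?G\<^esub>" "d \<otimes>\<^bsub>?G\<^esub> d = \<one>\<^bsub>?G\<^esub>"
      using Dnid[OF d] Tinv Dcar[OF d] by (simp_all add: BijG_one BijG_mult)
  next
    fix g d assume g: "g \<in> ?H" and d: "d \<in> ?D"
    have "\<exists>d0\<in>?D. ?D = {h \<otimes>\<^bsub>?G\<^esub> d0 \<otimes>\<^bsub>?G\<^esub> inv\<^bsub>?G\<^esub> h | h. h \<in> ?H}"
      using cc unfolding conj_class_def by assumption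
    then obtain d0 where d0: "d0 \<in> ?D" and Deq: "?D = {h \<otimes>\<^bsub>?G\<^esub> d0 \<otimes>\<^bsub>?G\<^esub> inv\<^bsub>?G\<^esub> h | h. h \<in> ?H}"
      by (rule bexE)
    have "d \<in> {h \<otimes>\<^bsub>?G\<^esub> d0 \<otimes>\<^bsub>?G\<^esub> inv\<^bsub>?G\<^esub> h | h. h \<in> ?H}"
      using d by (subst Deq[symmetric])
    then obtain h where h: "h \<in> ?H" and dh: "d = h \<otimes>\<^bsub>?G\<^esub> d0 \<otimes>\<^bsub>?G\<^esub> inv\<^bsub>?G\<^esub> h"
      by blast
    have gc: "g \<in> carrier ?G" and hc: "h \<in> carrier ?G"
      using subgroup.mem_carrier[OF Hsub g] subgroup.mem_carrier[OF Hsub h] by auto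
    have d0c: "d0 \<in> carrier ?G" using Dcar[OF d0] .
    have gh: "g \<otimes>\<^bsub>?G\<^esub> h \<in> ?H" using subgroup.m_closed[OF Hsub g h] .
    have "g \<otimes>\<^bsub>?G\<^esub> d \<otimes>\<^bsub>?G\<^esub> inv\<^bsub>?G\<^esub> g =
          (g \<otimes>\<^bsub>?G\<^esub> h) \<otimes>\<^bsub>?G\<^esub> d0 \<otimes>\<^bsub>?G\<^esub> inv\<^bsub>?G\<^esub> (g \<otimes>\<^bsub>?G\<^esub> h)"
      unfolding dh grp.inv_mult_group[OF gc hc] using gc hc d0c by (simp add: grp.m_assoc)
    then have "g \<otimes>\<^bsub>?G\<^esub> d \<otimes>\<^bsub>?G\<^esub> inv\<^bsub>?G\<^esub> g \<in> {h \<otimes>\<^bsub>?G\<^esub> d0 \<otimes>\<^bsub>?G\<^esub> inv\<^bsub>?G\<^esub> h | h. h \<in> ?H}"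
      using gh by blast
    then show "g \<otimes>\<^bsub>?G\<^esub> d \<otimes>\<^bsub>?G\<^esub> inv\<^bsub>?G\<^esub> g \<in> ?D" by (subst Deq)
  next
    fix d e' assume d: "d \<in> ?D" and e': "e' \<in> ?D"
    show "(d \<otimes>\<^bsub>?G\<^esub> e') [^]\<^bsub>?G\<^esub> (2::nat) = \<one>\<^bsub>?G\<^esub> \<or>
                     (d \<otimes>\<^bsub>?G\<^esub> e') [^]\<^bsub>?G\<^esub> (3::nat) = \<one>\<^bsub>?G\<^esub>"
    proof -
      have m: "d \<otimes>\<^bsub>?G\<^esub> e' = d \<circ> e'" using Dcar[OF d] Dcar[OF e'] by (rule BijG_mult)
      have c: "d \<otimes>\<^bsub>?G\<^esub> e' \<in> carrier ?G" using Dcar[OF d] Dcar[OF e'] by (rule grp.m_closed)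
      have "(d \<circ> e') ^^ 2 = id \<or> (d \<circ> e') ^^ 3 = id" using three d e' by blast
      then show ?thesis unfolding m BijG_one BijG_pow[OF c[unfolded m]] .
    qed
  next
    fix d0 e0 f0 assume d0: "d0 \<in> ?D" and e0: "e0 \<in> ?D" and f0: "f0 \<in> ?D"
      and iso: "?G\<lparr>carrier := generate ?G {e0, f0}\<rparr> \<cong> sym_group 3"
    obtain w where w: "Ok w" "d0 = T w" using Dform[OF d0] by blast
    obtain u where u: "Ok u" "e0 = T u" using Dform[OF e0] by blast
    obtain v where v: "Ok v" "f0 = T v" using Dform[OF f0] by blast
    have cd: "d0 \<in> carrier ?G" and ce: "e0 \<in> carrier ?G" and cf: "f0 \<in> carrier ?G"
      using Dcar d0 e0 f0 by auto
    have nc: "e0 \<circ> f0 \<noteq> f0 \<circ> e0"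
    proof
      assume c: "e0 \<circ> f0 = f0 \<circ> e0"
      obtain x y where xy: "x \<in> generate ?G {e0, f0}" "y \<in> generate ?G {e0, f0}"
        "x \<otimes>\<^bsub>?G\<^esub> y \<noteq> y \<otimes>\<^bsub>?G\<^esub> x"
        using S3_noncomm[OF iso] by blast
      have "x \<otimes>\<^bsub>?G\<^esub> y = y \<otimes>\<^bsub>?G\<^esub> x"
      proof (rule grp.generate_comm[OF _ _ xy(1,2)])
        show "{e0, f0} \<subseteq> carrier ?G" using ce cf by simp
        fix s t assume "s \<in> {e0, f0}" "t \<in> {e0, f0}"
        then show "s \<otimes>\<^bsub>?G\<^esub> t = t \<otimes>\<^bsub>?G\<^esub> s" using c ce cf by (auto simp: BijG_mult)
      qed
      then show False using xy(3) by simp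
    qed
    have nuv: "\<not> (B u v = 0 \<or> u = v \<or> u = - v)" using Tcomm[OF u(1) v(1)] nc u v by blast
    have c4: "4 * (B u v)^2 = 1" using pairL[OF u(1) v(1)] u v e0 f0 nuv by blast
    have uV: "u \<in> V" "B u u = 1" "half_axis sc m (sc (1/2) e + sc (1/2) u)" "sc (1/2) e + sc (1/2) u \<in> Ax"
      using u unfolding Ok_def by auto
    have vV: "v \<in> V" "B v v = 1" "half_axis sc m (sc (1/2) e + sc (1/2) v)" "sc (1/2) e + sc (1/2) v \<in> Ax"
      using v unfolding Ok_def by auto
    have wV: "w \<in> V" "B w w = 1" using w unfolding Ok_def by auto
    define z where "z = C.rho u v"
    have zAx: "sc (1/2) e + sc (1/2) z \<in> Ax"
      using closed uV vV C.tau_act[OF uV(1,2,3) vV(1)] unfolding z_def by metis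
    have zOk: "Ok z" unfolding Ok_def using zAx axes uV vV unfolding z_def by (auto simp: C.rho_unit)
    have Tz: "T u \<circ> T v \<circ> T u = T z"
      unfolding T_def z_def using C.tau_conj uV vV zOk[unfolded Ok_def z_def] by blast
    have Tznid: "T z \<noteq> id"
    proof
      assume "T z = id"
      then have "T u \<circ> (T u \<circ> T v \<circ> T u) \<circ> T u = T u \<circ> T u" using Tz by simp
      then have "(T u \<circ> T u) \<circ> T v \<circ> (T u \<circ> T u) = T u \<circ> T u" by (simp add: comp_assoc)
      then have "T v = id" using Tinv[OF u(1)] by simp
      then show False using Dnid[OF f0] v by simp
    qed
    have zD: "T z \<in> ?D" using inD[OF zOk Tznid] .
    have ef: "e0 \<otimes>\<^bsub>?G\<^esub> f0 = e0 \<circ> f0" using ce cf by (rule BijG_mult)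
    have efc: "e0 \<otimes>\<^bsub>?G\<^esub> f0 \<in> carrier ?G" using ce cf by (rule grp.m_closed)
    have prod_eq: "e0 \<otimes>\<^bsub>?G\<^esub> f0 \<otimes>\<^bsub>?G\<^esub> e0 = T z"
      using BijG_mult[OF efc ce] ef Tz u v by simp
    have ezc: "e0 \<otimes>\<^bsub>?G\<^esub> f0 \<otimes>\<^bsub>?G\<^esub> e0 \<in> carrier ?G" using ce cf by simp
    show "d0 \<otimes>\<^bsub>?G\<^esub> e0 = e0 \<otimes>\<^bsub>?G\<^esub> d0 \<or> d0 \<otimes>\<^bsub>?G\<^esub> f0 = f0 \<otimes>\<^bsub>?G\<^esub> d0 \<or>
          d0 \<otimes>\<^bsub>?G\<^esub> (e0 \<otimes>\<^bsub>?G\<^esub> f0 \<otimes>\<^bsub>?G\<^esub> e0) = (e0 \<otimes>\<^bsub>?G\<^esub> f0 \<otimes>\<^bsub>?G\<^esub> e0) \<otimes>\<^bsub>?G\<^esub> d0"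
    proof (cases "B w u = 0 \<or> w = u \<or> w = - u")
      case True
      then have "T w \<circ> T u = T u \<circ> T w" using Tcomm[OF w(1) u(1)] by blast
      then show ?thesis using cd ce w u by (simp add: BijG_mult)
    next
      case nu: False
      show ?thesis
      proof (cases "B w v = 0 \<or> w = v \<or> w = - v")
        case True
        then have "T w \<circ> T v = T v \<circ> T w" using Tcomm[OF w(1) v(1)] by blast
        then show ?thesis using cd cf w v by (simp add: BijG_mult)
      next
        case nv: False
        have a4: "4 * (B w u)^2 = 1" using pairL[OF w(1) u(1)] w u d0 e0 nu by blast
        have b4: "4 * (B w v)^2 = 1" using pairL[OF w(1) v(1)] w v d0 f0 nv by blast
        have zV: "z \<in> V" unfolding z_def using uV vV by simp
        have "B w z = B z w" using wV zV C.Bsym by simp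
        also have "\<dots> = 2 * B v u * B u w - B v w" unfolding z_def using uV vV wV by (simp add: C.rhoB)
        also have "\<dots> = 2 * B u v * B w u - B w v" using uV vV wV C.Bsym by simp
        finally have wz: "B w z = 2 * B u v * B w u - B w v" .
        have "4 * (B w z)^2 \<noteq> 1" unfolding wz by (rule scal4[OF char2 char3 a4 b4 c4])
        then have "B w z = 0 \<or> w = z \<or> w = - z" using pairL[OF w(1) zOk] w d0 zD by blast
        then have "T w \<circ> T z = T z \<circ> T w" using Tcomm[OF w(1) zOk] by blast
        then have "d0 \<otimes>\<^bsub>?G\<^esub> (e0 \<otimes>\<^bsub>?G\<^esub> f0 \<otimes>\<^bsub>?G\<^esub> e0) = (e0 \<otimes>\<^bsub>?G\<^esub> f0 \<otimes>\<^bsub>?G\<^esub> e0) \<otimes>\<^bsub>?G\<^esub> d0"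
          using cd ezc w by (simp add: BijG_mult prod_eq del: grp.m_closed)
        then show ?thesis by blast
      qed
    qed
  qed
qed

end
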